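(* Let $\mathbf{L}\colon\mathbb{R}^n\times\mathbb{R}^m\to\mathbb{R}$ be convex-concave and $L$-smooth, and write $\mathbb{A}=\nabla_{\pm}\mathbf{L}$. Fix $N\ge1$ and $0<\alpha\le\frac1L$. Given $x_0\in\mathbb{R}^n\times\mathbb{R}^m$ and $z_0=0$, define for $k=0,1,\dots,N-1$ (Dual Fast Extragradient) \[ \begin{aligned} x_{k+1/2}&=x_k-\alpha z_k-\alpha\mathbb{A}x_k,\\ x_{k+1}&=x_{k+1/2}-\tfrac{N-k-1}{N-k}\,\alpha\left(\mathbb{A}x_{k+1/2}-\mathbb{A}x_k\right),\\ z_{k+1}&=\tfrac{N-k-1}{N-k}\,z_k-\tfrac{1}{N-k}\,\mathbb{A}x_{k+1/2}. \end{aligned} \] Then for every saddle point $x_\star$ of $\mathbf{L}$ (equivalently $\nabla_\pm\mathbf{L}(x_\star)=0$), \[ \|\nabla\mathbf{L}(x_N)\|^2=\|\mathbb{A}x_N\|^2\le\frac{4\|x_0-x_\star\|^2}{\alpha^2N^2}. \]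
   Context: $\mathbf{L}$ is convex-concave if $\mathbf{L}(\cdot,v)$ is convex for each $v$ and $\mathbf{L}(u,\cdot)$ is concave for each $u$; it is $L$-smooth if differentiable with $L$-Lipschitz gradient. The saddle operator is $\nabla_\pm\mathbf{L}(u,v)=(\nabla_u\mathbf{L}(u,v),-\nabla_v\mathbf{L}(u,v))$, with joint variable $x=(u,v)$. *)

theory Defs
  imports "HOL-Analysis.Analysis"
begin

definition convex_concave :: "('u::real_vector \<times> 'v::real_vector \<Rightarrow> real) \<Rightarrow> bool" where
  "convex_concave L \<longleftrightarrow>
     (\<forall>v. convex_on UNIV (\<lambda>u. L (u, v))) \<and> (\<forall>u. concave_on UNIV (\<lambda>v. L (u, v)))"

definition is_gradient :: "('a::real_inner \<Rightarrow> real) \<Rightarrow> ('a \<Rightarrow> 'a) \<Rightarrow> bool" where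
  "is_gradient L G \<longleftrightarrow> (\<forall>x. (L has_derivative (\<lambda>h. G x \<bullet> h)) (at x))"

definition smooth_with_grad :: "real \<Rightarrow> ('a::real_inner \<Rightarrow> real) \<Rightarrow> ('a \<Rightarrow> 'a) \<Rightarrow> bool" where
  "smooth_with_grad Lc L G \<longleftrightarrow> is_gradient L G \<and> (\<forall>x y. norm (G x - G y) \<le> Lc * norm (x - y))"

definition saddle_op :: "('u \<times> 'v \<Rightarrow> 'u \<times> 'v::real_vector) \<Rightarrow> 'u \<times> 'v \<Rightarrow> 'u \<times> 'v" where
  "saddle_op G x = (fst (G x), - snd (G x))"

definition saddle_point :: "('u \<times> 'v \<Rightarrow> real) \<Rightarrow> 'u \<times> 'v \<Rightarrow> bool" where
  "saddle_point L xs \<longleftrightarrow>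
     (\<forall>u v. L (fst xs, v) \<le> L xs \<and> L xs \<le> L (u, snd xs))"

end

theory Submission
  imports Defs
begin
lemma tangent_ineq:
  fixes f :: "'a::real_normed_vector \<Rightarrow> real"
  assumes cv: "convex_on UNIV f" and d: "(f has_derivative f') (at x)"
  shows "f y \<ge> f x + f' (y - x)"
proof -
  define p where "p = (\<lambda>t::real. f (x + t *\<^sub>R (y - x)))"
  have lin: "linear f'" using d has_derivative_linear by blast
  have cvp: "convex_on UNIV p"
  proof (rule convex_onI)
    fix t a b :: real assume t: "t > 0" "t < 1"
    have "x + ((1 - t) * a + t * b) *\<^sub>R (y - x) = (1 - t) *\<^sub>R (x + a *\<^sub>R (y - x)) + t *\<^sub>R (x + b *\<^sub>R (y - x))"
      by (simp add: algebra_simps)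
    then show "p ((1 - t) *\<^sub>R a + t *\<^sub>R b) \<le> (1 - t) * p a + t * p b"
      unfolding p_def using convex_onD[OF cv, of t] t by simp
  qed simp
  have dl: "((\<lambda>t::real. x + t *\<^sub>R (y - x)) has_derivative (\<lambda>t. t *\<^sub>R (y - x))) (at 0)"
    by (auto intro!: derivative_eq_intros)
  have "(p has_derivative (\<lambda>t. f' (t *\<^sub>R (y - x)))) (at 0)"
    unfolding p_def using has_derivative_compose[OF dl] d by simp
  then have "(p has_derivative (\<lambda>t. f' (y - x) * t)) (at 0)"
    using linear_scale[OF lin] by (simp add: mult.commute)
  then have "(p has_field_derivative f' (y - x)) (at 0 within UNIV)"
    by (simp add: has_field_derivative_def)
  from convex_on_imp_above_tangent[OF cvp _ _ _ this, of 1]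
  have "p 1 - p 0 \<ge> f' (y - x) * (1 - 0)" by simp
  then show ?thesis unfolding p_def by simp
qed

lemma partial_derivs:
  fixes L :: "'u::real_inner \<times> 'v::real_inner \<Rightarrow> real"
  assumes g: "is_gradient L G"
  shows "((\<lambda>u'. L (u', v)) has_derivative (\<lambda>h. fst (G (u, v)) \<bullet> h)) (at u)"
    and "((\<lambda>v'. L (u, v')) has_derivative (\<lambda>h. snd (G (u, v)) \<bullet> h)) (at v)"
proof -
  have dL: "(L has_derivative (\<lambda>h. G (u, v) \<bullet> h)) (at (u, v))"
    using g unfolding is_gradient_def by blast
  have d1: "((\<lambda>u'. (u', v)) has_derivative (\<lambda>h. (h, 0))) (at u)"
    by (auto intro!: derivative_eq_intros)
  have d2: "((\<lambda>v'. (u, v')) has_derivative (\<lambda>h. (0, h))) (at v)"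
    by (auto intro!: derivative_eq_intros)
  show "((\<lambda>u'. L (u', v)) has_derivative (\<lambda>h. fst (G (u, v)) \<bullet> h)) (at u)"
    using has_derivative_compose[OF d1, of L "\<lambda>h. G (u, v) \<bullet> h"] dL by (simp add: inner_prod_def)
  show "((\<lambda>v'. L (u, v')) has_derivative (\<lambda>h. snd (G (u, v)) \<bullet> h)) (at v)"
    using has_derivative_compose[OF d2, of L "\<lambda>h. G (u, v) \<bullet> h"] dL by (simp add: inner_prod_def)
qed

lemma tangents:
  fixes L :: "'u::real_inner \<times> 'v::real_inner \<Rightarrow> real"
  assumes cc: "convex_concave L" and g: "is_gradient L G"
  shows "L (u', v) \<ge> L (u, v) + fst (G (u, v)) \<bullet> (u' - u)"
    and "L (u, v') \<le> L (u, v) + snd (G (u, v)) \<bullet> (v' - v)"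
proof -
  show "L (u', v) \<ge> L (u, v) + fst (G (u, v)) \<bullet> (u' - u)"
    using tangent_ineq[OF _ partial_derivs(1)[OF g, of v u], of u'] cc
    unfolding convex_concave_def by auto
  have cv: "convex_on UNIV (\<lambda>v'. - L (u, v'))"
    using cc unfolding convex_concave_def concave_on_def by auto
  have "((\<lambda>v'. - L (u, v')) has_derivative (\<lambda>h. - (snd (G (u, v)) \<bullet> h))) (at v)"
    using has_derivative_minus[OF partial_derivs(2)[OF g, of u v]] .
  from tangent_ineq[OF cv this, of v']
  show "L (u, v') \<le> L (u, v) + snd (G (u, v)) \<bullet> (v' - v)" by simp
qed

lemma saddle_mono:
  fixes L :: "'u::real_inner \<times> 'v::real_inner \<Rightarrow> real"
  assumes cc: "convex_concave L" and g: "is_gradient L G"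
  shows "inner (saddle_op G a - saddle_op G b) (a - b) \<ge> 0"
proof -
  obtain u v where a: "a = (u, v)" by (cases a)
  obtain u' v' where b: "b = (u', v')" by (cases b)
  note t1 = tangents(1)[OF cc g, where u'=u' and u=u and v=v]
  note t2 = tangents(1)[OF cc g, where u'=u and u=u' and v=v']
  note t3 = tangents(2)[OF cc g, where u=u and v=v and v'=v']
  note t4 = tangents(2)[OF cc g, where u=u' and v=v' and v'=v]
  show ?thesis using t1 t2 t3 t4 unfolding a b saddle_op_def
    by (simp add: inner_diff_left inner_diff_right inner_minus_left)
qed

lemma saddle_star:
  fixes L :: "'u::real_inner \<times> 'v::real_inner \<Rightarrow> real"
  assumes cc: "convex_concave L" and g: "is_gradient L G" and sp: "saddle_point L xs"
  shows "inner (saddle_op G a) (a - xs) \<ge> 0"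
proof -
  obtain u v where a: "a = (u, v)" by (cases a)
  obtain us vs where b: "xs = (us, vs)" by (cases xs)
  note t1 = tangents(1)[OF cc g, where u'=us and u=u and v=v]
  note t3 = tangents(2)[OF cc g, where u=u and v=v and v'=vs]
  have s: "L (us, v) \<le> L (us, vs)" "L (us, vs) \<le> L (u, vs)"
    using sp unfolding saddle_point_def b by auto
  show ?thesis using t1 t3 s unfolding a b saddle_op_def
    by (simp add: inner_diff_left inner_diff_right inner_minus_left)
qed

lemma saddle_norm:
  "norm (saddle_op G a - saddle_op G b) = norm (G a - G b)"
  "norm (saddle_op G a) = norm (G a)"
proof -
  obtain p q where "G a = (p, q)" by (cases "G a")
  moreover obtain p' q' where "G b = (p', q')" by (cases "G b")
  ultimately show "norm (saddle_op G a - saddle_op G b) = norm (G a - G b)"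
    "norm (saddle_op G a) = norm (G a)"
    unfolding saddle_op_def by (simp_all add: norm_Pair norm_minus_commute)
qed


lemma step_identity0:
  fixes x w g h y v :: "'a::real_inner" and n m a b :: real
  assumes na: "n * a = 1" and mb: "m * b = 1" and m: "m = n - 1"
  shows "4 * a * inner (x - y) (w + v) - 2 * inner (w + v) (w + v)
         - (4 * b * inner ((x - w - g) - (m * a) *\<^sub>R (h - g) - y) (((m * a) *\<^sub>R w - a *\<^sub>R h) + v)
            - 2 * inner (((m * a) *\<^sub>R w - a *\<^sub>R h) + v) (((m * a) *\<^sub>R w - a *\<^sub>R h) + v))
       = 2 * a * a * (inner (w + g) (w + g) - inner (g - h) (g - h))
         + 4 * a * b * inner (v - h) (y - (x - w - g))"
  apply (simp add: inner_add_left inner_add_right inner_diff_left inner_diff_right inner_commute)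
  using na mb m by algebra

lemma last_identity:
  fixes w g h :: "'a::real_inner"
  shows "4 * inner (w + g) (w + h) - 2 * inner (w + h) (w + h)
       = 2 * (inner (w + g) (w + g) - inner (g - h) (g - h))"
  by (simp add: inner_add_left inner_add_right inner_diff_left inner_diff_right inner_commute algebra_simps)

theorem theorem6p1:
  fixes L :: "(real ^ 'n) \<times> (real ^ 'm) \<Rightarrow> real"
    and G :: "(real ^ 'n) \<times> (real ^ 'm) \<Rightarrow> (real ^ 'n) \<times> (real ^ 'm)"
    and Lc \<alpha> :: real and N :: nat
    and x xh z :: "nat \<Rightarrow> (real ^ 'n) \<times> (real ^ 'm)"
    and xs :: "(real ^ 'n) \<times> (real ^ 'm)"
  assumes cc: "convex_concave L"
    and Lpos: "Lc > 0"
    and smooth: "smooth_with_grad Lc L G"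
    and N: "N \<ge> 1"
    and \<alpha>pos: "0 < \<alpha>" and \<alpha>le: "\<alpha> \<le> 1 / Lc"
    and z0: "z 0 = 0"
    and half: "\<And>k. k < N \<Longrightarrow>
        xh k = x k - \<alpha> *\<^sub>R z k - \<alpha> *\<^sub>R saddle_op G (x k)"
    and xstep: "\<And>k. k < N \<Longrightarrow>
        x (Suc k) = xh k - ((real N - real k - 1) / (real N - real k) * \<alpha>) *\<^sub>R
                             (saddle_op G (xh k) - saddle_op G (x k))"
    and zstep: "\<And>k. k < N \<Longrightarrow>
        z (Suc k) = ((real N - real k - 1) / (real N - real k)) *\<^sub>R z k
                    - (1 / (real N - real k)) *\<^sub>R saddle_op G (xh k)"
    and sp: "saddle_point L xs"
  shows "norm (G (x N)) = norm (saddle_op G (x N)) \<and>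
         (norm (saddle_op G (x N)))\<^sup>2 \<le> 4 * (norm (x 0 - xs))\<^sup>2 / (\<alpha>\<^sup>2 * (real N)\<^sup>2)"
proof -
  let ?A = "saddle_op G"
  have grad: "is_gradient L G" and lip: "\<And>a b. norm (G a - G b) \<le> Lc * norm (a - b)"
    using smooth by (auto simp: smooth_with_grad_def)
  have aLc: "\<alpha> * Lc \<le> 1" using \<alpha>le Lpos by (simp add: field_simps)
  have alip: "norm (\<alpha> *\<^sub>R ?A a - \<alpha> *\<^sub>R ?A b) \<le> norm (a - b)" for a b
  proof -
    have "norm (\<alpha> *\<^sub>R ?A a - \<alpha> *\<^sub>R ?A b) = \<alpha> * norm (G a - G b)"
      using saddle_norm(1)[of G a b] \<alpha>pos by (simp add: scaleR_diff_right[symmetric])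
    also have "\<dots> \<le> \<alpha> * (Lc * norm (a - b))"
      using lip[of a b] \<alpha>pos by (simp add: mult_left_mono)
    also have "\<dots> = (\<alpha> * Lc) * norm (a - b)" by simp
    also have "\<dots> \<le> 1 * norm (a - b)"
      using aLc by (intro mult_right_mono) auto
    finally show ?thesis by simp
  qed
  define w where "w k = \<alpha> *\<^sub>R z k" for k
  define y where "y = x N"
  define v where "v = \<alpha> *\<^sub>R ?A (x N)"
  define \<Phi> where "\<Phi> k = 4 * (1 / (real N - real k)) * inner (x k - y) (w k + v)
                       - 2 * inner (w k + v) (w k + v)" for k
  have xhw: "xh k = x k - w k - \<alpha> *\<^sub>R ?A (x k)" if "k < N" for k
    using half[OF that] by (simp add: w_def)
  have lipk: "inner (w k + \<alpha> *\<^sub>R ?A (x k)) (w k + \<alpha> *\<^sub>R ?A (x k))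
      - inner (\<alpha> *\<^sub>R ?A (x k) - \<alpha> *\<^sub>R ?A (xh k)) (\<alpha> *\<^sub>R ?A (x k) - \<alpha> *\<^sub>R ?A (xh k)) \<ge> 0"
    if "k < N" for k
  proof -
    have e: "w k + \<alpha> *\<^sub>R ?A (x k) = x k - xh k" using xhw[OF that] by simp
    have "norm (\<alpha> *\<^sub>R ?A (x k) - \<alpha> *\<^sub>R ?A (xh k)) \<le> norm (x k - xh k)" by (rule alip)
    then have "(norm (\<alpha> *\<^sub>R ?A (x k) - \<alpha> *\<^sub>R ?A (xh k)))\<^sup>2 \<le> (norm (x k - xh k))\<^sup>2"
      by (intro power_mono) auto
    then show ?thesis unfolding e power2_norm_eq_inner by simp
  qed
  have monok: "inner (v - \<alpha> *\<^sub>R ?A p) (y - p) \<ge> 0" for p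
  proof -
    have "inner (v - \<alpha> *\<^sub>R ?A p) (y - p) = \<alpha> * inner (?A (x N) - ?A p) (x N - p)"
      unfolding v_def y_def by (simp add: scaleR_diff_right[symmetric])
    then show ?thesis using saddle_mono[OF cc grad, of "x N" p] \<alpha>pos by simp
  qed
  have stepk: "\<Phi> (Suc k) \<le> \<Phi> k" if k: "Suc k < N" for k
  proof -
    define n where "n = real N - real k"
    define m where "m = n - 1"
    define a where "a = 1 / n"
    define b where "b = 1 / m"
    have n1: "n > 1" using k unfolding n_def by linarith
    have na: "n * a = 1" and mb: "m * b = 1" and mm: "m = n - 1"
      using n1 unfolding a_def b_def m_def by auto
    have apos: "a > 0" and bpos: "b > 0" using n1 unfolding a_def b_def m_def by auto
    define g where "g = \<alpha> *\<^sub>R ?A (x k)"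
    define h where "h = \<alpha> *\<^sub>R ?A (xh k)"
    have kN: "k < N" using k by simp
    have ma: "m * a = (real N - real k - 1) / (real N - real k)"
      unfolding m_def a_def n_def by simp
    have xS: "x (Suc k) = (x k - w k - g) - (m * a) *\<^sub>R (h - g)"
      unfolding xstep[OF kN] ma g_def h_def xhw[OF kN, symmetric]
      by (simp add: scaleR_diff_right)
    have wS: "w (Suc k) = (m * a) *\<^sub>R w k - a *\<^sub>R h"
      unfolding w_def zstep[OF kN] ma h_def
      by (simp add: scaleR_diff_right a_def n_def)
    have Pk: "\<Phi> k = 4 * a * inner (x k - y) (w k + v) - 2 * inner (w k + v) (w k + v)"
      unfolding \<Phi>_def a_def n_def by simp
    have PSk: "\<Phi> (Suc k) = 4 * b * inner (x (Suc k) - y) (w (Suc k) + v)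
                           - 2 * inner (w (Suc k) + v) (w (Suc k) + v)"
      unfolding \<Phi>_def b_def m_def n_def by simp
    have "\<Phi> k - \<Phi> (Suc k) = 2 * a * a * (inner (w k + g) (w k + g) - inner (g - h) (g - h))
         + 4 * a * b * inner (v - h) (y - (x k - w k - g))"
      unfolding Pk PSk xS wS by (rule step_identity0[OF na mb mm])
    moreover have "2 * a * a * (inner (w k + g) (w k + g) - inner (g - h) (g - h)) \<ge> 0"
      using lipk[OF kN] apos unfolding g_def h_def by simp
    moreover have "4 * a * b * inner (v - h) (y - (x k - w k - g)) \<ge> 0"
      using monok[of "xh k"] apos bpos unfolding h_def g_def xhw[OF kN, symmetric] by simp
    ultimately show ?thesis by linarith
  qed
  have lastP: "\<Phi> (N - 1) \<ge> 0"
  proof -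
    define k where "k = N - 1"
    have kN: "k < N" and Sk: "Suc k = N" using N unfolding k_def by auto
    have r1: "real N - real k = 1" using N unfolding k_def by simp
    define g where "g = \<alpha> *\<^sub>R ?A (x k)"
    define h where "h = \<alpha> *\<^sub>R ?A (xh k)"
    have xN: "x N = xh k" using xstep[OF kN] unfolding Sk r1 by simp
    have vh: "v = h" unfolding v_def h_def xN ..
    have e: "x k - y = w k + g" unfolding y_def xN xhw[OF kN] g_def by simp
    have "\<Phi> k = 4 * inner (w k + g) (w k + h) - 2 * inner (w k + h) (w k + h)"
      unfolding \<Phi>_def r1 e vh by simp
    also have "\<dots> = 2 * (inner (w k + g) (w k + g) - inner (g - h) (g - h))"
      by (rule last_identity)
    also have "\<dots> \<ge> 0" using lipk[OF kN] unfolding g_def h_def by simp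
    finally show ?thesis unfolding k_def .
  qed
  have allP: "j \<le> N - 1 \<Longrightarrow> \<Phi> (N - 1 - j) \<ge> 0" for j
  proof (induction j)
    case 0 then show ?case using lastP by simp
  next
    case (Suc j)
    have "Suc (N - 1 - Suc j) = N - 1 - j" and "Suc (N - 1 - Suc j) < N" using Suc.prems N by auto
    then have "\<Phi> (N - 1 - j) \<le> \<Phi> (N - 1 - Suc j)" using stepk by metis
    then show ?case using Suc by simp
  qed
  have P0: "\<Phi> 0 \<ge> 0" using allP[of "N - 1"] by simp
  have Npos: "real N > 0" using N by simp
  have P0': "2 * inner v v \<le> 4 / real N * inner (x 0 - y) v"
    using P0 unfolding \<Phi>_def w_def z0 by (simp add: inner_commute)
  have star: "inner v (y - xs) \<ge> 0"
    unfolding v_def y_def using saddle_star[OF cc grad sp, of "x N"] \<alpha>pos by simp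
  have "inner (x 0 - y) v = inner (x 0 - xs) v - inner v (y - xs)"
    by (simp add: inner_diff_left inner_diff_right inner_commute)
  also have "\<dots> \<le> inner (x 0 - xs) v" using star by simp
  also have "\<dots> \<le> norm (x 0 - xs) * norm v" by (rule norm_cauchy_schwarz)
  finally have cs: "inner (x 0 - y) v \<le> norm (x 0 - xs) * norm v" .
  have "2 * (norm v)\<^sup>2 \<le> 4 / real N * (norm (x 0 - xs) * norm v)"
    using P0' cs Npos unfolding power2_norm_eq_inner
    by (smt (verit) divide_nonneg_nonneg mult_left_mono)
  then have "real N * norm v * norm v \<le> 2 * norm (x 0 - xs) * norm v"
    using Npos by (simp add: field_simps power2_eq_square)
  then have vb: "real N * norm v \<le> 2 * norm (x 0 - xs)"
    by (cases "norm v = 0") (auto simp: mult.commute mult.left_commute)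
  have nv: "norm v = \<alpha> * norm (?A (x N))" unfolding v_def using \<alpha>pos by simp
  have "(real N * norm v)\<^sup>2 \<le> (2 * norm (x 0 - xs))\<^sup>2"
    using vb Npos by (intro power_mono) auto
  then have "\<alpha>\<^sup>2 * (real N)\<^sup>2 * (norm (?A (x N)))\<^sup>2 \<le> 4 * (norm (x 0 - xs))\<^sup>2"
    unfolding nv by (simp add: power_mult_distrib algebra_simps)
  then have "(norm (?A (x N)))\<^sup>2 \<le> 4 * (norm (x 0 - xs))\<^sup>2 / (\<alpha>\<^sup>2 * (real N)\<^sup>2)"
    using \<alpha>pos Npos by (simp add: pos_le_divide_eq mult.commute mult.left_commute)
  then show ?thesis using saddle_norm(2)[of G "x N"] by simp
qed

end
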